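(* In the standing setting below, let $X_i=(x_i,u_i)\in\mathbb{X}\times\mathbb{R}$ for $i=0,1$, and suppose $F_{X_0X_1}(x_i)=u_i$ for $i=0,1$. Then there exist $y\in\mathbb{Y}$ and $h\in\mathbb{R}$ such that $-c(x_i,y)+h=u_i$ for $i=0,1$.
   Context: Standing setting: $\mathbb{X},\mathbb{Y}\subset\mathbb{R}^n$ are compact with non-empty interior; $c:\mathbb{X}\times\mathbb{Y}\to\mathbb{R}$ has continuous $D_xc$, $D_yc$, and continuous mixed second derivatives with $D^2_{xy}c=(D^2_{yx}c)^T$; for each $x$ the map $y\mapsto -D_xc(x,y)$ is injective on $\mathbb{Y}$ and for each $y$ the map $x\mapsto -D_yc(x,y)$ is injective on $\mathbb{X}$; $D^2_{xy}c(x,y)$ is invertible everywhere; for every $y$ the set $\{-D_yc(x,y):x\in\mathbb{X}\}$ is convex and for every $x$ the set $\{-D_xc(x,y):y\in\mathbb{Y}\}$ is convex. $c$-chord: for $X_i=(x_i,u_i)\in\mathbb{X}\times\mathbb{R}$, $F_{X_0X_1}(x)=\sup\{-c(x,y)+h: y\in\mathbb{Y},h\in\mathbb{R},-c(x_i,y)+h\le u_i, i=0,1\}$. *)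

theory Defs
  imports "HOL-Analysis.Analysis"
begin

text \<open>The cost is a curried function
  \<open>c x y\<close>. \<open>Dxc x y\<close> and \<open>Dyc x y\<close> are the gradients of c in x and y;
  \<open>Dxyc x y\<close> is the matrix D^2_{xy}c with entries d^2 c/(dx_i dy_j), i.e. the
  derivative of \<open>y \<mapsto> Dxc x y\<close>; \<open>Dyxc x y\<close> is the derivative of \<open>x \<mapsto> Dyc x y\<close>.\<close>

definition standing_setting ::
  "(real^'n) set \<Rightarrow> (real^'n) set \<Rightarrow> (real^'n \<Rightarrow> real^'n \<Rightarrow> real)
   \<Rightarrow> (real^'n \<Rightarrow> real^'n \<Rightarrow> real^'n) \<Rightarrow> (real^'n \<Rightarrow> real^'n \<Rightarrow> real^'n)
   \<Rightarrow> (real^'n \<Rightarrow> real^'n \<Rightarrow> real^'n^'n) \<Rightarrow> (real^'n \<Rightarrow> real^'n \<Rightarrow> real^'n^'n) \<Rightarrow> bool"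
where
  "standing_setting X Y c Dxc Dyc Dxyc Dyxc \<longleftrightarrow>
     compact X \<and> compact Y \<and> interior X \<noteq> {} \<and> interior Y \<noteq> {}
   \<and> (\<forall>x\<in>X. \<forall>y\<in>Y. ((\<lambda>x'. c x' y) has_derivative (\<lambda>v. Dxc x y \<bullet> v)) (at x within X))
   \<and> (\<forall>x\<in>X. \<forall>y\<in>Y. ((\<lambda>y'. c x y') has_derivative (\<lambda>v. Dyc x y \<bullet> v)) (at y within Y))
   \<and> continuous_on (X \<times> Y) (\<lambda>(x,y). Dxc x y)
   \<and> continuous_on (X \<times> Y) (\<lambda>(x,y). Dyc x y)
   \<and> (\<forall>x\<in>X. \<forall>y\<in>Y. ((\<lambda>y'. Dxc x y') has_derivative (\<lambda>v. Dxyc x y *v v)) (at y within Y))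
   \<and> (\<forall>x\<in>X. \<forall>y\<in>Y. ((\<lambda>x'. Dyc x' y) has_derivative (\<lambda>v. Dyxc x y *v v)) (at x within X))
   \<and> continuous_on (X \<times> Y) (\<lambda>(x,y). Dxyc x y)
   \<and> continuous_on (X \<times> Y) (\<lambda>(x,y). Dyxc x y)
   \<and> (\<forall>x\<in>X. \<forall>y\<in>Y. Dxyc x y = transpose (Dyxc x y))
   \<and> (\<forall>x\<in>X. inj_on (\<lambda>y. - Dxc x y) Y)
   \<and> (\<forall>y\<in>Y. inj_on (\<lambda>x. - Dyc x y) X)
   \<and> (\<forall>x\<in>X. \<forall>y\<in>Y. invertible (Dxyc x y))
   \<and> (\<forall>y\<in>Y. convex ((\<lambda>x. - Dyc x y) ` X))
   \<and> (\<forall>x\<in>X. convex ((\<lambda>y. - Dxc x y) ` Y))"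

definition c_chord ::
  "('a \<Rightarrow> 'b \<Rightarrow> real) \<Rightarrow> 'b set \<Rightarrow> 'a \<Rightarrow> real \<Rightarrow> 'a \<Rightarrow> real \<Rightarrow> 'a \<Rightarrow> real"
where
  "c_chord c Y x0 u0 x1 u1 x =
     Sup {- c x y + h | y h. y \<in> Y \<and> - c x0 y + h \<le> u0 \<and> - c x1 y + h \<le> u1}"

end

theory Submission
  imports Defs
begin

theorem lemma3p6:
  fixes X Y :: "(real^'n) set" and c :: "real^'n \<Rightarrow> real^'n \<Rightarrow> real"
    and Dxc Dyc :: "real^'n \<Rightarrow> real^'n \<Rightarrow> real^'n"
    and Dxyc Dyxc :: "real^'n \<Rightarrow> real^'n \<Rightarrow> real^'n^'n"
    and x0 x1 :: "real^'n" and u0 u1 :: real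
  assumes "standing_setting X Y c Dxc Dyc Dxyc Dyxc"
    and "x0 \<in> X" and "x1 \<in> X"
    and "c_chord c Y x0 u0 x1 u1 x0 = u0"
    and "c_chord c Y x0 u0 x1 u1 x1 = u1"
  shows "\<exists>y\<in>Y. \<exists>h. - c x0 y + h = u0 \<and> - c x1 y + h = u1"
proof -
  note S = assms(1)[unfolded standing_setting_def]
  have cY: "compact Y" using S by blast
  have Yne: "Y \<noteq> {}" using S by auto
  have cont0: "continuous_on Y (c x0)"
    using S assms(2) by (intro has_derivative_continuous_on) blast
  have cont1: "continuous_on Y (c x1)"
    using S assms(3) by (intro has_derivative_continuous_on) blast
  define g where "g y = c x1 y - c x0 y + u1 - u0" for y
  have gc: "continuous_on Y g" unfolding g_def
    by (intro continuous_intros cont0 cont1)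
  define f where "f y = - Dxc x0 y" for y
  have fc: "continuous_on Y f"
  proof -
    have "continuous_on (X \<times> Y) (\<lambda>(x,y). Dxc x y)" using S by blast
    moreover have "continuous_on Y (\<lambda>y. (x0, y))" by (intro continuous_intros)
    moreover have "(\<lambda>y. (x0, y)) ` Y \<subseteq> X \<times> Y" using assms(2) by auto
    ultimately have "continuous_on Y ((\<lambda>(x,y). Dxc x y) \<circ> (\<lambda>y. (x0, y)))"
      using continuous_on_compose continuous_on_subset by blast
    then have "continuous_on Y (\<lambda>y. Dxc x0 y)" by (simp add: o_def)
    then show ?thesis unfolding f_def by (intro continuous_intros)
  qed
  have finj: "inj_on f Y" using S assms(2) unfolding f_def by blast
  have fconv: "convex (f ` Y)" using S assms(2) unfolding f_def by blast
  obtain k where hk: "homeomorphism Y (f ` Y) f k"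
    using homeomorphism_compact[OF cY fc refl finj] by blast
  have "connected (k ` (f ` Y))"
    using connected_continuous_image[OF homeomorphism_cont2[OF hk] convex_connected[OF fconv]] .
  then have conY: "connected Y" using homeomorphism_image2[OF hk] by simp
  have A: "\<exists>y\<in>Y. g y \<ge> 0"
  proof (rule ccontr)
    assume na: "\<not> ?thesis"
    obtain ym where ym: "ym \<in> Y" "\<forall>y\<in>Y. g y \<le> g ym"
      using continuous_attains_sup[OF cY Yne gc] by blast
    have neg: "g ym < 0" using na ym by force
    let ?T = "{- c x0 y + h | y h. y \<in> Y \<and> - c x0 y + h \<le> u0 \<and> - c x1 y + h \<le> u1}"
    obtain y' where y': "y' \<in> Y" using Yne by blast
    have "- c x0 y' + min (u0 + c x0 y') (u1 + c x1 y') \<in> ?T"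
      using y' by (intro CollectI exI[of _ y'] exI[of _ "min (u0 + c x0 y') (u1 + c x1 y')"]) auto
    then have Tne: "?T \<noteq> {}" by blast
    have "\<forall>t\<in>?T. t \<le> u0 + g ym"
    proof
      fix t assume "t \<in> ?T"
      then obtain y h where yh: "t = - c x0 y + h" "y \<in> Y" "- c x1 y + h \<le> u1" by blast
      have "g y \<le> g ym" using ym yh by blast
      then show "t \<le> u0 + g ym" using yh unfolding g_def by linarith
    qed
    then have "Sup ?T \<le> u0 + g ym" using cSup_least[OF Tne] by blast
    then show False using assms(4) neg unfolding c_chord_def by linarith
  qed
  have B: "\<exists>y\<in>Y. g y \<le> 0"
  proof (rule ccontr)
    assume na: "\<not> ?thesis"
    obtain ym where ym: "ym \<in> Y" "\<forall>y\<in>Y. g ym \<le> g y"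
      using continuous_attains_inf[OF cY Yne gc] by blast
    have pos: "g ym > 0" using na ym by force
    let ?T = "{- c x1 y + h | y h. y \<in> Y \<and> - c x0 y + h \<le> u0 \<and> - c x1 y + h \<le> u1}"
    obtain y' where y': "y' \<in> Y" using Yne by blast
    have "- c x1 y' + min (u0 + c x0 y') (u1 + c x1 y') \<in> ?T"
      using y' by (intro CollectI exI[of _ y'] exI[of _ "min (u0 + c x0 y') (u1 + c x1 y')"]) auto
    then have Tne: "?T \<noteq> {}" by blast
    have "\<forall>t\<in>?T. t \<le> u1 - g ym"
    proof
      fix t assume "t \<in> ?T"
      then obtain y h where yh: "t = - c x1 y + h" "y \<in> Y" "- c x0 y + h \<le> u0" by blast
      have "g ym \<le> g y" using ym yh by blast
      then show "t \<le> u1 - g ym" using yh unfolding g_def by linarith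
    qed
    then have "Sup ?T \<le> u1 - g ym" using cSup_least[OF Tne] by blast
    then show False using assms(5) pos unfolding c_chord_def by linarith
  qed
  have con: "connected (g ` Y)" by (rule connected_continuous_image[OF gc conY])
  obtain ya yb where ya: "ya \<in> Y" "g ya \<ge> 0" and yb: "yb \<in> Y" "g yb \<le> 0" using A B by blast
  have "0 \<in> g ` Y"
    using connectedD_interval[OF con, of "g yb" "g ya" 0] ya yb by auto
  then obtain y where y: "y \<in> Y" "g y = 0" by (metis imageE)
  show ?thesis
    by (rule bexI[OF _ y(1)], rule exI[of _ "u0 + c x0 y"]) (use y in \<open>auto simp: g_def\<close>)
qed

end
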